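(* Let $P$ be a poset with least element and $f:P\times P\to P$ monotone. Let $m,n\ge0$ be such that for every $x\in P$, $\mu_y.f(x,y)=f_x^m(\bot)$ where $f_x=f(x,-)$, and such that $h(x)=\mu_y.f(x,y)$ satisfies $\mu.h=h^n(\bot)$. Then the map $d(x)=f(x,x)$ has a least fixed point and $\mu_x.f(x,x)=d^{nm}(\bot)$.
   Context: $\mu$ denotes least fixed point; exponents denote iterated composition. *)

theory Defs
  imports Main "HOL-Library.Product_Order"
begin

definition is_lfp :: "('a::order \<Rightarrow> 'a) \<Rightarrow> 'a \<Rightarrow> bool" where
  "is_lfp g x \<longleftrightarrow> g x = x \<and> (\<forall>y. g y = y \<longrightarrow> x \<le> y)"

text \<open>The least fixed point mu.g (meaningful when it exists).\<close>
definition mu :: "('a::order \<Rightarrow> 'a) \<Rightarrow> 'a" where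
  "mu g = (THE x. is_lfp g x)"

end

theory Submission
  imports Defs
begin

lemma lfp_unique: "is_lfp g a \<Longrightarrow> is_lfp g b \<Longrightarrow> a = b"
  unfolding is_lfp_def by (meson order.antisym)

lemma mu_eq: "is_lfp g a \<Longrightarrow> mu g = a"
  unfolding mu_def using lfp_unique by (metis theI)

lemma monof: "mono f \<Longrightarrow> x \<le> x' \<Longrightarrow> y \<le> y' \<Longrightarrow> f (x, y) \<le> (f (x', y') :: 'a::order)"
  by (simp add: mono_def less_eq_prod_def)

lemma iter_mono_x:
  fixes f :: "'a::order_bot \<times> 'a \<Rightarrow> 'a"
  assumes "mono f" "x \<le> x'"
  shows "((\<lambda>y. f (x, y)) ^^ j) bot \<le> ((\<lambda>y. f (x', y)) ^^ j) bot"
  by (induction j) (auto intro: monof[OF assms(1) assms(2)])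

lemma chain_d:
  fixes d :: "'a::order_bot \<Rightarrow> 'a"
  assumes "mono d"
  shows "(d ^^ i) bot \<le> (d ^^ (i + k)) bot"
proof (induction i)
  case 0 then show ?case by simp
next
  case (Suc i) then show ?case using assms by (simp add: mono_def)
qed

lemma chain_d': "mono (d :: 'a::order_bot \<Rightarrow> 'a) \<Longrightarrow> i \<le> j \<Longrightarrow> (d ^^ i) bot \<le> (d ^^ j) bot"
  using chain_d by (metis le_add_diff_inverse)

theorem mainTheorem15:
  fixes f :: "'a::order_bot \<times> 'a \<Rightarrow> 'a" and m n :: nat
  assumes "mono f"
    and "\<forall>x. is_lfp (\<lambda>y. f (x, y)) (((\<lambda>y. f (x, y)) ^^ m) bot)"
    and "is_lfp (\<lambda>x. mu (\<lambda>y. f (x, y))) (((\<lambda>x. mu (\<lambda>y. f (x, y))) ^^ n) bot)"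
  shows "is_lfp (\<lambda>x. f (x, x)) (((\<lambda>x. f (x, x)) ^^ (n * m)) bot)"
proof -
  define h where "h = (\<lambda>x. mu (\<lambda>y. f (x, y)))"
  define d where "d = (\<lambda>x. f (x, x))"
  have hx: "h x = ((\<lambda>y. f (x, y)) ^^ m) bot" for x
    unfolding h_def using assms(2) mu_eq by blast
  have hl: "is_lfp (\<lambda>y. f (x, y)) (h x)" for x using hx assms(2) by simp
  have hmono: "mono h" unfolding mono_def hx using iter_mono_x[OF assms(1)] by blast
  have dmono: "mono d" unfolding mono_def d_def using monof[OF assms(1)] by blast
  define a where "a = (h ^^ n) bot"
  have al: "is_lfp h a" using assms(3) unfolding a_def h_def by simp
  have ha: "h a = a" using al is_lfp_def by blast
  have da: "d a = a" using hl[of a] ha unfolding is_lfp_def d_def by simp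
  have least: "a \<le> z" if "d z = z" for z
  proof -
    have "h z \<le> z" using hl[of z] that unfolding is_lfp_def d_def by simp
    have "(h ^^ k) bot \<le> z" for k
    proof (induction k)
      case 0 then show ?case by simp
    next
      case (Suc k)
      have "h ((h ^^ k) bot) \<le> h z" using hmono Suc by (simp add: mono_def)
      then show ?case using \<open>h z \<le> z\<close> by simp
    qed
    then show ?thesis unfolding a_def by blast
  qed
  have up: "(d ^^ j) bot \<le> a" for j
  proof (induction j)
    case 0 then show ?case by simp
  next
    case (Suc j)
    have "d ((d ^^ j) bot) \<le> d a" using dmono Suc by (simp add: mono_def)
    then show ?case using da by simp
  qed
  have low: "(h ^^ k) bot \<le> (d ^^ (k * m)) bot" for k
  proof (induction k)
    case 0 then show ?case by simp
  next
    case (Suc k)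
    define u where "u = (d ^^ (k * m)) bot"
    have inner: "((\<lambda>y. f (u, y)) ^^ j) bot \<le> (d ^^ (k * m + j)) bot" for j
    proof (induction j)
      case 0 then show ?case by simp
    next
      case (Suc j)
      have uu: "u \<le> (d ^^ (k * m + j)) bot" unfolding u_def by (rule chain_d[OF dmono])
      have "f (u, ((\<lambda>y. f (u, y)) ^^ j) bot) \<le> f ((d ^^ (k * m + j)) bot, (d ^^ (k * m + j)) bot)"
        by (rule monof[OF assms(1) uu Suc.IH])
      then show ?case by (simp add: d_def)
    qed
    have "(h ^^ Suc k) bot = h ((h ^^ k) bot)" by simp
    also have "\<dots> \<le> h u" using hmono Suc unfolding u_def by (simp add: mono_def)
    also have "\<dots> \<le> (d ^^ (k * m + m)) bot" unfolding hx using inner .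
    finally show ?case by (simp add: add.commute)
  qed
  have eq: "(d ^^ (n * m)) bot = a"
    using low[of n] up[of "n*m"] unfolding a_def by simp
  show ?thesis unfolding is_lfp_def using eq da least unfolding d_def by simp
qed

end
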